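(* For every CABA framework $F_c$, $\mathit{GrCInst}(\mathit{CArg})=\mathit{Arg}_c$ modulo ground constraints; that is, every ground constrained instance of a constrained argument of $F_c$ is equal modulo ground constraints to some argument of $\mathit{Ground}(F_c)$, and every argument of $\mathit{Ground}(F_c)$ is equal modulo ground constraints to some ground constrained instance of a constrained argument of $F_c$.
   Context: Conventions. $\mathsf X$: tuple of variables; $\mathsf t$: tuple of terms. A substitution $\vartheta=\{X_1/t_1,\dots,X_n/t_n\}$ maps distinct variables to terms; $e\vartheta$ replaces each $X_i$ by $t_i$; $\{\mathsf X/\mathsf t\}$ maps $\mathsf X$ componentwise to $\mathsf t$. An object is ground if it has no variables; $\vartheta$ is grounding for $e$ if $e\vartheta$ is ground. Theory of constraints. $\mathcal{CT}$ is a first-order theory with equality (identity on its domain, including the Clark Equality Theory) whose atomic formulas form the set $\mathcal C$ of constraints; a finite set $\{c_1,\dots,c_n\}\subseteq\mathcal C$ is consistent if $\mathcal{CT}\models\exists(c_1\wedge\dots\wedge c_n)$. CABA framework $F_c=\langle\mathcal L_c,\mathcal C,\mathcal R,\mathcal{CT},\mathcal A,\overline{\cdot}\rangle$: $\mathcal L_c$ a set of atoms; $\mathcal C\subseteq\mathcal L_c$ the constraints; $\mathcal R$ rules $s_0\leftarrow s_1,\dots,s_m$ ($s_0\in\mathcal L_c\setminus\mathcal C$, $s_i\in\mathcal L_c$) in normalised form $p(\mathsf X_0)\leftarrow C,p_1(\mathsf X_1),\dots,p_m(\mathsf X_m)$ ($C\subseteq\mathcal C$, each $\mathsf X_i$ a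 tuple of distinct variables); $\mathcal A\subseteq\mathcal L_c\setminus\mathcal C$ nonempty assumptions, not heads of rules; $\overline\cdot:\mathcal A\to\mathcal L_c\setminus\mathcal C$ total with $\overline{p(\mathsf t)}=cp(\mathsf t)$ for a fixed predicate $cp$ per assumption predicate $p$; $\mathcal L_c,\mathcal C,\mathcal A$ predicate closed. Constrained arguments. A tight constrained argument $C\cup A\vdash_R s$ (consistent $C\subseteq\mathcal C$, $A\subseteq\mathcal A$, $R\subseteq\mathcal R$, $s\in\mathcal L_c\setminus\mathcal C$) is a finite tree with root $s$, each non-leaf node $p(\mathsf t)$ having as children exactly $s_1\vartheta,\dots,s_m\vartheta$ for exactly one renamed-apart copy $p(\mathsf X)\leftarrow s_1,\dots,s_m$ of a rule of $R$ with $\vartheta=\{\mathsf X/\mathsf t\}$ (or the single child true for a fact), each leaf a constraint of $C$, an assumption of $A$ or true; $C,A,R$ are exactly those occurring/used. A constrained argument is $C\vartheta\cup D\cup A\vartheta\vdash_R s\vartheta$ for some tight $C\cup A\vdash_R s$, substitution $\vartheta$ and $D\subseteq\mathcal C$ with $C\vartheta\cup D$ consistent; a constrained instance of a constrained argument $C\cup A\vdash_R s$ (via $\vartheta$, $D$) is $C\vartheta\cup D\cup A\vartheta\vdash_R s\vartheta$ with $C\vartheta\cup D$ consistent. $\mathit{CArg}$: set of all constrained arguments; $\mathit{GrCInst}(\alpha)$: ground constrained instances of $\alpha$; $\mathit{GrCInst}(\Gamma)=\bigcup_{\alpha\in\Gamma}\mathit{GrCInst}(\alpha)$. ABA and grounding.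 An argument $A\vdash_R s$ of an ABA framework $\langle\mathcal L,\mathcal R,\mathcal A,\overline\cdot\rangle$ is a finite tree with root $s$, each non-leaf node $s'$ having as children exactly the body elements of one rule of $R$ with head $s'$ (or the single child true for a fact), each leaf an assumption in $A$ or true. $\mathit{Ground}(F_c)=\langle\mathcal L_{cg},\mathcal R_g,\mathcal A_g,\overline\cdot\rangle$: $\mathcal L_{cg}$ the ground atoms of $\mathcal L_c$; $\mathcal R_g$ all ground instances of rules of $\mathcal R$ plus the facts $c\leftarrow$ for ground $c\in\mathcal C$ with $\mathcal{CT}\models c$; $\mathcal A_g$ the ground assumptions; contraries inherited. $\mathit{Arg}_c$ is the set of all arguments of $\mathit{Ground}(F_c)$. Equality modulo ground constraints. For ground atoms, $\mathcal{CT}\models p(\mathsf t)\leftrightarrow p(\mathsf t')$ means $\mathcal{CT}\models\mathsf t=\mathsf t'$; for ground sets of atoms $A,A'$, $\mathcal{CT}\models\bigwedge A\leftrightarrow\bigwedge A'$ means every atom of each set is so equivalent to some atom of the other. Two ground arguments with (non-constraint) assumption sets $A,A'$ and claims $s,s'$ are equal modulo ground constraints if $\mathcal{CT}\models\bigwedge A\leftrightarrow\bigwedge A'$ and $\mathcal{CT}\models s\leftrightarrow s'$ (ground constraints in the supports are disregarded). *)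

theory Defs
  imports Main
begin

datatype ('f,'v) trm = Var 'v | Fn 'f "('f,'v) trm list"

datatype ('p,'f,'v) atm = Atm 'p "('f,'v) trm list"

primrec tvars :: "('f,'v) trm \<Rightarrow> 'v set" where
  "tvars (Var x) = {x}"
| "tvars (Fn f ts) = \<Union> (set (map tvars ts))"

primrec tsubst :: "('v \<Rightarrow> ('f,'v) trm) \<Rightarrow> ('f,'v) trm \<Rightarrow> ('f,'v) trm" where
  "tsubst \<sigma> (Var x) = \<sigma> x"
| "tsubst \<sigma> (Fn f ts) = Fn f (map (tsubst \<sigma>) ts)"

fun pred :: "('p,'f,'v) atm \<Rightarrow> 'p" where "pred (Atm p ts) = p"
fun args :: "('p,'f,'v) atm \<Rightarrow> ('f,'v) trm list" where "args (Atm p ts) = ts"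

fun avars :: "('p,'f,'v) atm \<Rightarrow> 'v set" where
  "avars (Atm p ts) = \<Union> (set (map tvars ts))"

fun asubst :: "('v \<Rightarrow> ('f,'v) trm) \<Rightarrow> ('p,'f,'v) atm \<Rightarrow> ('p,'f,'v) atm" where
  "asubst \<sigma> (Atm p ts) = Atm p (map (tsubst \<sigma>) ts)"

definition ground_atm :: "('p,'f,'v) atm \<Rightarrow> bool" where
  "ground_atm a \<longleftrightarrow> avars a = {}"

text \<open>A rule s0 <- s1,...,sm is a pair (head, body list).\<close>
type_synonym ('p,'f,'v) rule = "('p,'f,'v) atm \<times> ('p,'f,'v) atm list"

section \<open>Semantics of the constraint theory CT (given by its class of models)\<close>

text \<open>A model: interpretation of function symbols and of predicate symbols over a domain 'd.\<close>
type_synonym ('p,'f,'d) model = "('f \<Rightarrow> 'd list \<Rightarrow> 'd) \<times> ('p \<Rightarrow> 'd list \<Rightarrow> bool)"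

primrec teval :: "('f \<Rightarrow> 'd list \<Rightarrow> 'd) \<Rightarrow> ('v \<Rightarrow> 'd) \<Rightarrow> ('f,'v) trm \<Rightarrow> 'd" where
  "teval F \<sigma> (Var x) = \<sigma> x"
| "teval F \<sigma> (Fn f ts) = F f (map (teval F \<sigma>) ts)"

fun asat :: "('p,'f,'d) model \<Rightarrow> ('v \<Rightarrow> 'd) \<Rightarrow> ('p,'f,'v) atm \<Rightarrow> bool" where
  "asat (F, P) \<sigma> (Atm p ts) = P p (map (teval F \<sigma>) ts)"

text \<open>Consistency of a finite set of constraints: CT entails the existential closure of its conjunction.\<close>
definition ct_consistent :: "('p,'f,'d) model set \<Rightarrow> ('p,'f,'v) atm set \<Rightarrow> bool" where
  "ct_consistent CT S \<longleftrightarrow> finite S \<and> (\<forall>M\<in>CT. \<exists>\<sigma>. \<forall>c\<in>S. asat M \<sigma> c)"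

definition ct_entails :: "('p,'f,'d) model set \<Rightarrow> ('p,'f,'v) atm \<Rightarrow> bool" where
  "ct_entails CT c \<longleftrightarrow> (\<forall>M\<in>CT. \<forall>\<sigma>. asat M \<sigma> c)"

text \<open>CT entails p(t) <-> p(t'), i.e. CT entails t = t' (componentwise).\<close>
definition ct_atm_equiv :: "('p,'f,'d) model set \<Rightarrow> ('p,'f,'v) atm \<Rightarrow> ('p,'f,'v) atm \<Rightarrow> bool" where
  "ct_atm_equiv CT a b \<longleftrightarrow> pred a = pred b \<and> length (args a) = length (args b) \<and>
     (\<forall>M\<in>CT. \<forall>\<sigma>. map (teval (fst M) \<sigma>) (args a) = map (teval (fst M) \<sigma>) (args b))"

definition ct_set_equiv :: "('p,'f,'d) model set \<Rightarrow> ('p,'f,'v) atm set \<Rightarrow> ('p,'f,'v) atm set \<Rightarrow> bool" where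
  "ct_set_equiv CT A B \<longleftrightarrow> (\<forall>a\<in>A. \<exists>b\<in>B. ct_atm_equiv CT a b) \<and> (\<forall>b\<in>B. \<exists>a\<in>A. ct_atm_equiv CT a b)"

text \<open>Equality modulo ground constraints of two ground arguments with (non-constraint)
  assumption sets A, A' and claims s, s'.\<close>
definition eq_mod_gc :: "('p,'f,'d) model set \<Rightarrow> ('p,'f,'v) atm set \<Rightarrow> ('p,'f,'v) atm
     \<Rightarrow> ('p,'f,'v) atm set \<Rightarrow> ('p,'f,'v) atm \<Rightarrow> bool" where
  "eq_mod_gc CT A s A' s' \<longleftrightarrow> ct_set_equiv CT A A' \<and> ct_atm_equiv CT s s'"

definition eq_model :: "'p \<Rightarrow> ('p,'f,'d) model \<Rightarrow> bool" where
  "eq_model eqp M \<longleftrightarrow> (\<forall>ds. snd M eqp ds \<longleftrightarrow> (\<exists>d. ds = [d, d]))"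

definition cet_model :: "('p,'f,'d) model \<Rightarrow> bool" where
  "cet_model M \<longleftrightarrow>
     (\<forall>f g ds es. fst M f ds = fst M g es \<longrightarrow> f = g \<and> ds = es) \<and>
     (\<forall>(\<sigma>::nat \<Rightarrow> 'd) (t::('f,nat) trm) x. x \<in> tvars t \<and> t \<noteq> Var x \<longrightarrow> teval (fst M) \<sigma> t \<noteq> \<sigma> x)"

definition pred_closed :: "('p,'f,'v) atm set \<Rightarrow> bool" where
  "pred_closed S \<longleftrightarrow> (\<forall>p ts ts'. Atm p ts \<in> S \<longrightarrow> length ts' = length ts \<longrightarrow> Atm p ts' \<in> S)"

definition normalised :: "('p,'f,'v) atm set \<Rightarrow> ('p,'f,'v) rule \<Rightarrow> bool" where
  "normalised Cs r \<longleftrightarrow>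
     (\<exists>p xs. fst r = Atm p (map Var xs) \<and> distinct xs) \<and>
     (\<forall>a\<in>set (snd r). a \<notin> Cs \<longrightarrow> (\<exists>q ys. a = Atm q (map Var ys) \<and> distinct ys))"

fun contrary :: "('p \<Rightarrow> 'p) \<Rightarrow> ('p,'f,'v) atm \<Rightarrow> ('p,'f,'v) atm" where
  "contrary cp (Atm p ts) = Atm (cp p) ts"

text \<open>F_c = (Lc, Cs, R, CT, Asm, contrary cp); eqp is the equality predicate of CT.\<close>
definition caba_framework :: "('p,'f,'v) atm set \<Rightarrow> ('p,'f,'v) atm set \<Rightarrow> ('p,'f,'v) rule set
     \<Rightarrow> ('p,'f,'d) model set \<Rightarrow> ('p,'f,'v) atm set \<Rightarrow> ('p \<Rightarrow> 'p) \<Rightarrow> 'p \<Rightarrow> bool" where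
  "caba_framework Lc Cs R CT Asm cp eqp \<longleftrightarrow>
     pred_closed Lc \<and> pred_closed Cs \<and> pred_closed Asm \<and>
     Cs \<subseteq> Lc \<and> Asm \<subseteq> Lc - Cs \<and> Asm \<noteq> {} \<and>
     (\<forall>x y. Atm eqp [Var x, Var y] \<in> Cs) \<and>
     (\<forall>M\<in>CT. eq_model eqp M \<and> cet_model M) \<and>
     (\<forall>r\<in>R. fst r \<in> Lc - Cs \<and> set (snd r) \<subseteq> Lc \<and> fst r \<notin> Asm \<and> normalised Cs r) \<and>
     (\<forall>a\<in>Asm. contrary cp a \<in> Lc - Cs)"

text \<open>Nodes: the leaf true, a leaf atom, or an atom expanded by a rule (annotated with the rule used).\<close>
datatype ('a,'r) dtree = DTrue | DLeaf 'a | DNode 'a 'r "('a,'r) dtree list"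

fun dlabel :: "('a,'r) dtree \<Rightarrow> 'a option" where
  "dlabel DTrue = None"
| "dlabel (DLeaf a) = Some a"
| "dlabel (DNode a r ts) = Some a"

primrec dleaves :: "('a,'r) dtree \<Rightarrow> 'a set" where
  "dleaves DTrue = {}"
| "dleaves (DLeaf a) = {a}"
| "dleaves (DNode a r ts) = \<Union> (set (map dleaves ts))"

primrec drules :: "('a,'r) dtree \<Rightarrow> 'r set" where
  "drules DTrue = {}"
| "drules (DLeaf a) = {}"
| "drules (DNode a r ts) = insert r (\<Union> (set (map drules ts)))"

fun lvars :: "('p,'f,'v) atm option \<Rightarrow> 'v set" where
  "lvars None = {}"
| "lvars (Some a) = avars a"

text \<open>Variables introduced (by the renamed-apart rule copy) at each internal node, in preorder.\<close>
primrec dintros :: "(('p,'f,'v) atm, 'r) dtree \<Rightarrow> 'v set list" where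
  "dintros DTrue = []"
| "dintros (DLeaf a) = []"
| "dintros (DNode a r ts) = (\<Union> (set (map (lvars \<circ> dlabel) ts)) - avars a) # concat (map dintros ts)"

text \<open>Node a = p(t) expanded with a renamed-apart copy of rule r = p(X) <- body:
  sigma maps the head variables X to t and renames the body-only variables
  injectively to fresh variables (not occurring in a); children = body under sigma.\<close>
definition rule_step :: "('p,'f,'v) rule \<Rightarrow> ('p,'f,'v) atm \<Rightarrow> ('p,'f,'v) atm option list \<Rightarrow> bool" where
  "rule_step r a labs \<longleftrightarrow>
     (\<exists>p xs ts \<sigma>. fst r = Atm p (map Var xs) \<and> a = Atm p ts \<and> length ts = length xs \<and>
        (\<forall>i<length xs. \<sigma> (xs ! i) = ts ! i) \<and>
        (let Y = \<Union> (set (map avars (snd r))) - set xs in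
           (\<forall>y\<in>Y. \<exists>z. \<sigma> y = Var z) \<and> inj_on \<sigma> Y \<and> (\<Union>y\<in>Y. tvars (\<sigma> y)) \<inter> avars a = {}) \<and>
        labs = (if snd r = [] then [None] else map (\<lambda>c. Some (asubst \<sigma> c)) (snd r)))"

fun tight_wf :: "('p,'f,'v) rule set \<Rightarrow> ('p,'f,'v) atm set \<Rightarrow> ('p,'f,'v) atm set
     \<Rightarrow> (('p,'f,'v) atm, ('p,'f,'v) rule) dtree \<Rightarrow> bool" where
  "tight_wf R Cs Asm DTrue = True"
| "tight_wf R Cs Asm (DLeaf a) = (a \<in> Cs \<or> a \<in> Asm)"
| "tight_wf R Cs Asm (DNode a r ts) =
     (r \<in> R \<and> rule_step r a (map dlabel ts) \<and> (\<forall>t\<in>set ts. tight_wf R Cs Asm t))"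

definition renamed_apart :: "(('p,'f,'v) atm, 'r) dtree \<Rightarrow> bool" where
  "renamed_apart T \<longleftrightarrow> (let I = dintros T in
     (\<forall>i<length I. \<forall>j<length I. i \<noteq> j \<longrightarrow> I ! i \<inter> I ! j = {}) \<and>
     (\<forall>i<length I. I ! i \<inter> lvars (dlabel T) = {}))"

text \<open>Constrained arguments are represented as (C, A, Rs, s) standing for C \<union> A \<turnstile>_Rs s.\<close>
type_synonym ('p,'f,'v) carg =
  "('p,'f,'v) atm set \<times> ('p,'f,'v) atm set \<times> ('p,'f,'v) rule set \<times> ('p,'f,'v) atm"

definition tight_arg :: "('p,'f,'v) atm set \<Rightarrow> ('p,'f,'v) atm set \<Rightarrow> ('p,'f,'v) rule set
     \<Rightarrow> ('p,'f,'d) model set \<Rightarrow> ('p,'f,'v) atm set \<Rightarrow> ('p,'f,'v) carg \<Rightarrow> bool" where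
  "tight_arg Lc Cs R CT Asm \<alpha> \<longleftrightarrow> (case \<alpha> of (C, A, Rs, s) \<Rightarrow>
     (\<exists>T. T \<noteq> DTrue \<and> tight_wf R Cs Asm T \<and> renamed_apart T \<and> dlabel T = Some s \<and>
          s \<in> Lc - Cs \<and> C = dleaves T \<inter> Cs \<and> A = dleaves T \<inter> Asm \<and> Rs = drules T \<and>
          ct_consistent CT C))"

text \<open>Constrained instances Cth \<union> D \<union> Ath \<turnstile>_Rs sth of a constrained argument.\<close>
definition c_inst :: "('p,'f,'v) atm set \<Rightarrow> ('p,'f,'d) model set \<Rightarrow> ('p,'f,'v) carg \<Rightarrow> ('p,'f,'v) carg set" where
  "c_inst Cs CT \<alpha> = (case \<alpha> of (C, A, Rs, s) \<Rightarrow>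
     {(asubst th ` C \<union> D, asubst th ` A, Rs, asubst th s) | th D.
        D \<subseteq> Cs \<and> ct_consistent CT (asubst th ` C \<union> D)})"

definition c_args :: "('p,'f,'v) atm set \<Rightarrow> ('p,'f,'v) atm set \<Rightarrow> ('p,'f,'v) rule set
     \<Rightarrow> ('p,'f,'d) model set \<Rightarrow> ('p,'f,'v) atm set \<Rightarrow> ('p,'f,'v) carg set" where
  "c_args Lc Cs R CT Asm = \<Union> {c_inst Cs CT \<alpha> | \<alpha>. tight_arg Lc Cs R CT Asm \<alpha>}"

definition ground_carg :: "('p,'f,'v) carg \<Rightarrow> bool" where
  "ground_carg \<alpha> \<longleftrightarrow> (case \<alpha> of (C, A, Rs, s) \<Rightarrow>
     (\<forall>c\<in>C. ground_atm c) \<and> (\<forall>a\<in>A. ground_atm a) \<and> ground_atm s)"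

definition gr_c_inst :: "('p,'f,'v) atm set \<Rightarrow> ('p,'f,'d) model set \<Rightarrow> ('p,'f,'v) carg set \<Rightarrow> ('p,'f,'v) carg set" where
  "gr_c_inst Cs CT \<Gamma> = (\<Union>\<alpha>\<in>\<Gamma>. {\<beta> \<in> c_inst Cs CT \<alpha>. ground_carg \<beta>})"

definition ground_rules :: "('p,'f,'v) atm set \<Rightarrow> ('p,'f,'v) rule set \<Rightarrow> ('p,'f,'d) model set
     \<Rightarrow> ('p,'f,'v) rule set" where
  "ground_rules Cs R CT =
     {(asubst \<sigma> h, map (asubst \<sigma>) b) | h b \<sigma>. (h, b) \<in> R \<and> ground_atm (asubst \<sigma> h) \<and>
          (\<forall>c\<in>set b. ground_atm (asubst \<sigma> c))}
     \<union> {(c, []) | c. c \<in> Cs \<and> ground_atm c \<and> ct_entails CT c}"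

definition ground_asms :: "('p,'f,'v) atm set \<Rightarrow> ('p,'f,'v) atm set" where
  "ground_asms Asm = {a \<in> Asm. ground_atm a}"

fun aba_wf :: "('a \<times> 'a list) set \<Rightarrow> 'a set \<Rightarrow> ('a, 'a \<times> 'a list) dtree \<Rightarrow> bool" where
  "aba_wf Rg Ag DTrue = True"
| "aba_wf Rg Ag (DLeaf a) = (a \<in> Ag)"
| "aba_wf Rg Ag (DNode a r ts) =
     (r \<in> Rg \<and> fst r = a \<and> map dlabel ts = (if snd r = [] then [None] else map Some (snd r)) \<and>
      (\<forall>t\<in>set ts. aba_wf Rg Ag t))"

text \<open>ABA arguments A \<turnstile>_Rs s, represented as (A, Rs, s).\<close>
definition aba_args :: "('a \<times> 'a list) set \<Rightarrow> 'a set \<Rightarrow> ('a set \<times> ('a \<times> 'a list) set \<times> 'a) set" where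
  "aba_args Rg Ag = {(dleaves T, drules T, s) | T s. T \<noteq> DTrue \<and> aba_wf Rg Ag T \<and> dlabel T = Some s}"

definition arg_c :: "('p,'f,'v) atm set \<Rightarrow> ('p,'f,'v) rule set \<Rightarrow> ('p,'f,'d) model set
     \<Rightarrow> ('p,'f,'v) atm set \<Rightarrow> (('p,'f,'v) atm set \<times> ('p,'f,'v) rule set \<times> ('p,'f,'v) atm) set" where
  "arg_c Cs R CT Asm = aba_args (ground_rules Cs R CT) (ground_asms Asm)"

end

theory Submission
  imports Defs "HOL-Library.Countable"
begin


lemma tsubst_tsubst: "tsubst \<sigma> (tsubst \<tau> t) = tsubst (tsubst \<sigma> \<circ> \<tau>) t"
  by (induction t) auto

lemma asubst_asubst: "asubst \<sigma> (asubst \<tau> a) = asubst (tsubst \<sigma> \<circ> \<tau>) a"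
  by (cases a) (auto simp: tsubst_tsubst)

lemma tvars_tsubst: "tvars (tsubst \<sigma> t) = (\<Union>x\<in>tvars t. tvars (\<sigma> x))"
  by (induction t) auto

lemma avars_asubst: "avars (asubst \<sigma> a) = (\<Union>x\<in>avars a. tvars (\<sigma> x))"
  by (cases a) (auto simp: tvars_tsubst)

lemma tsubst_cong: "(\<And>x. x \<in> tvars t \<Longrightarrow> \<sigma> x = \<tau> x) \<Longrightarrow> tsubst \<sigma> t = tsubst \<tau> t"
  by (induction t) auto

lemma asubst_cong: "(\<And>x. x \<in> avars a \<Longrightarrow> \<sigma> x = \<tau> x) \<Longrightarrow> asubst \<sigma> a = asubst \<tau> a"
  by (cases a) (auto intro: tsubst_cong)

lemma tsubst_Var: "tsubst Var t = t"
  by (induction t) (auto simp: map_idI)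

lemma asubst_ground: "ground_atm a \<Longrightarrow> asubst \<sigma> a = a"
proof -
  assume "ground_atm a"
  then have "asubst \<sigma> a = asubst Var a"
    by (intro asubst_cong) (auto simp: ground_atm_def)
  also have "\<dots> = a" by (cases a) (auto simp: tsubst_Var map_idI)
  finally show ?thesis .
qed

lemma teval_tsubst: "teval F \<sigma> (tsubst th t) = teval F (teval F \<sigma> \<circ> th) t"
  by (induction t) (auto simp: comp_def intro!: arg_cong[where f="F _"] map_cong)

lemma asat_asubst: "asat M \<sigma> (asubst th a) = asat M (teval (fst M) \<sigma> \<circ> th) a"
  by (cases M; cases a) (auto simp: teval_tsubst comp_def)

lemma teval_cong: "(\<And>x. x \<in> tvars t \<Longrightarrow> \<sigma> x = \<tau> x) \<Longrightarrow> teval F \<sigma> t = teval F \<tau> t"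
  by (induction t) (auto intro!: arg_cong[where f="F _"] map_cong)

lemma asat_cong: "(\<And>x. x \<in> avars a \<Longrightarrow> \<sigma> x = \<tau> x) \<Longrightarrow> asat M \<sigma> a = asat M \<tau> a"
proof (cases M; cases a)
  fix F P p ts assume "\<And>x. x \<in> avars a \<Longrightarrow> \<sigma> x = \<tau> x" "M = (F,P)" "a = Atm p ts"
  then show ?thesis
    by (auto intro!: arg_cong[where f="P p"] map_cong teval_cong)
qed

lemma asat_ground: "ground_atm a \<Longrightarrow> asat M \<sigma> a = asat M \<tau> a"
  by (rule asat_cong) (auto simp: ground_atm_def)

lemma finite_tvars: "finite (tvars t)"
  by (induction t) auto

lemma finite_avars: "finite (avars a)"
  by (cases a) (auto simp: finite_tvars)

lemma finite_dleaves: "finite (dleaves T)"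
  by (induction T) auto

lemma ground_tsubst: "(\<And>x. tvars (\<sigma> x) = {}) \<Longrightarrow> tvars (tsubst \<sigma> t) = {}"
  by (simp add: tvars_tsubst)

lemma ground_asubst: "(\<And>x. tvars (\<sigma> x) = {}) \<Longrightarrow> ground_atm (asubst \<sigma> a)"
  by (simp add: avars_asubst ground_atm_def)

lemma consistent_entails: "ct_consistent CT S \<Longrightarrow> c \<in> S \<Longrightarrow> ground_atm c \<Longrightarrow> ct_entails CT c"
  unfolding ct_consistent_def ct_entails_def using asat_ground by metis

lemma entails_consistent: "finite S \<Longrightarrow> (\<And>c. c \<in> S \<Longrightarrow> ct_entails CT c) \<Longrightarrow> ct_consistent CT S"
  unfolding ct_consistent_def ct_entails_def by auto

lemma dlabel_None: "dlabel T = None \<longleftrightarrow> T = DTrue"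
  by (cases T) auto

lemma pred_closed_asubst: "pred_closed S \<Longrightarrow> a \<in> S \<Longrightarrow> asubst \<sigma> a \<in> S"
  unfolding pred_closed_def by (cases a) auto

lemma pred_closed_asubst_rev: "pred_closed S \<Longrightarrow> asubst \<sigma> a \<in> S \<Longrightarrow> a \<in> S"
  unfolding pred_closed_def by (cases a) (metis asubst.simps length_map)

lemma ct_atm_equiv_refl: "ct_atm_equiv CT a a"
  by (simp add: ct_atm_equiv_def)

lemma eq_mod_gc_refl: "eq_mod_gc CT A s A s"
  unfolding eq_mod_gc_def ct_set_equiv_def using ct_atm_equiv_refl by blast



lemma ground_lift:
  assumes pcC: "pred_closed Cs" and pcA: "pred_closed Asm" and disj: "Cs \<inter> Asm = {}"
    and gr: "\<And>x. tvars (\<theta> x) = {}"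
  shows "tight_wf R Cs Asm T \<Longrightarrow> (\<forall>c\<in>dleaves T \<inter> Cs. ct_entails CT (asubst \<theta> c)) \<Longrightarrow>
    \<exists>T'. aba_wf (ground_rules Cs R CT) (ground_asms Asm) T' \<and>
         dleaves T' = asubst \<theta> ` (dleaves T \<inter> Asm) \<and> dlabel T' = map_option (asubst \<theta>) (dlabel T)"
proof (induction T)
  case DTrue
  then show ?case by (intro exI[of _ DTrue]) auto
next
  case (DLeaf a)
  show ?case
  proof (cases "a \<in> Cs")
    case True
    let ?c = "asubst \<theta> a"
    have g: "ground_atm ?c" by (rule ground_asubst) (rule gr)
    have "(?c, []) \<in> ground_rules Cs R CT"
      unfolding ground_rules_def using True DLeaf.prems pred_closed_asubst[OF pcC True] g
      by auto
    then show ?thesis using True disj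
      by (intro exI[of _ "DNode ?c (?c, []) [DTrue]"]) auto
  next
    case False
    then have "a \<in> Asm" using DLeaf.prems by auto
    then show ?thesis
      by (intro exI[of _ "DLeaf (asubst \<theta> a)"])
         (auto simp: ground_asms_def pred_closed_asubst[OF pcA] ground_asubst[OF gr])
  qed
next
  case (DNode a r ts)
  have "\<forall>t\<in>set ts. \<exists>T'. aba_wf (ground_rules Cs R CT) (ground_asms Asm) T' \<and>
         dleaves T' = asubst \<theta> ` (dleaves t \<inter> Asm) \<and> dlabel T' = map_option (asubst \<theta>) (dlabel t)"
  proof
    fix t assume t: "t \<in> set ts"
    show "\<exists>T'. aba_wf (ground_rules Cs R CT) (ground_asms Asm) T' \<and>
         dleaves T' = asubst \<theta> ` (dleaves t \<inter> Asm) \<and> dlabel T' = map_option (asubst \<theta>) (dlabel t)"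
      using DNode.IH[OF t] DNode.prems t by auto
  qed
  then obtain f where f: "\<And>t. t \<in> set ts \<Longrightarrow> aba_wf (ground_rules Cs R CT) (ground_asms Asm) (f t) \<and>
         dleaves (f t) = asubst \<theta> ` (dleaves t \<inter> Asm) \<and> dlabel (f t) = map_option (asubst \<theta>) (dlabel t)"
    by metis
  have rR: "r \<in> R" and rs: "rule_step r a (map dlabel ts)" using DNode.prems by auto
  then obtain q xs ts0 \<sigma> where h: "fst r = Atm q (map Var xs)" and a: "a = Atm q ts0"
    and len: "length ts0 = length xs" and \<sigma>: "\<forall>i<length xs. \<sigma> (xs ! i) = ts0 ! i"
    and labs: "map dlabel ts = (if snd r = [] then [None] else map (\<lambda>c. Some (asubst \<sigma> c)) (snd r))"
    unfolding rule_step_def by blast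
  define \<sigma>' where "\<sigma>' = tsubst \<theta> \<circ> \<sigma>"
  define r' where "r' = (asubst \<theta> a, map (asubst \<sigma>') (snd r))"
  have hd: "asubst \<sigma>' (fst r) = asubst \<theta> a"
    using h a len \<sigma> by (auto simp: \<sigma>'_def intro!: nth_equalityI)
  have "r' \<in> ground_rules Cs R CT"
    unfolding ground_rules_def r'_def
    using rR hd[symmetric] ground_asubst[OF gr] by (auto intro!: exI[of _ "fst r"] exI[of _ "snd r"] exI[of _ \<sigma>']
        simp: \<sigma>'_def ground_asubst ground_tsubst gr)
  moreover have "map dlabel (map f ts) = (if snd r' = [] then [None] else map Some (snd r'))"
  proof -
    have "map dlabel (map f ts) = map (map_option (asubst \<theta>)) (map dlabel ts)"
      using f by auto
    then show ?thesis using labs by (auto simp: r'_def \<sigma>'_def asubst_asubst)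
  qed
  moreover have "dleaves (DNode (asubst \<theta> a) r' (map f ts)) = asubst \<theta> ` (dleaves (DNode a r ts) \<inter> Asm)"
    using f by auto
  ultimately show ?case using f
    by (intro exI[of _ "DNode (asubst \<theta> a) r' (map f ts)"]) (auto simp: r'_def)
qed



fun pd :: "'a set list \<Rightarrow> bool" where
  "pd [] = True"
| "pd (x # xs) = (pd xs \<and> (\<forall>y\<in>set xs. x \<inter> y = {}))"

lemma pd_append: "pd (xs @ ys) = (pd xs \<and> pd ys \<and> (\<forall>x\<in>set xs. \<forall>y\<in>set ys. x \<inter> y = {}))"
  by (induction xs) auto

lemma pd_concat_map:
  "(\<And>i. i < n \<Longrightarrow> pd (F i)) \<Longrightarrow> (\<And>i x. i < n \<Longrightarrow> x \<in> set (F i) \<Longrightarrow> x \<subseteq> U i) \<Longrightarrow>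
   (\<And>i j. i < n \<Longrightarrow> j < n \<Longrightarrow> i \<noteq> j \<Longrightarrow> U i \<inter> U j = {}) \<Longrightarrow> pd (concat (map F [0..<n]))"
proof (induction n)
  case 0 then show ?case by simp
next
  case (Suc n)
  have "pd (concat (map F [0..<n]))" using Suc by auto
  moreover have "\<forall>x\<in>set (concat (map F [0..<n])). \<forall>y\<in>set (F n). x \<inter> y = {}"
  proof (intro ballI)
    fix x y assume x: "x \<in> set (concat (map F [0..<n]))" and y: "y \<in> set (F n)"
    then obtain i where i: "i < n" "x \<in> set (F i)" by auto
    have "x \<subseteq> U i" "y \<subseteq> U n" using Suc.prems(2) i y by auto
    moreover have "U i \<inter> U n = {}" using Suc.prems(3) i by auto
    ultimately show "x \<inter> y = {}" by blast
  qed
  ultimately show ?case using Suc.prems by (auto simp: pd_append)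
qed

lemma pd_nth: "pd L \<Longrightarrow> i < length L \<Longrightarrow> j < length L \<Longrightarrow> i \<noteq> j \<Longrightarrow> L ! i \<inter> L ! j = {}"
proof (induction L arbitrary: i j)
  case Nil then show ?case by simp
next
  case (Cons x L)
  show ?case
  proof (cases i)
    case 0
    then obtain j' where "j = Suc j'" using Cons by (cases j) auto
    then show ?thesis using Cons 0 by auto
  next
    case (Suc i')
    show ?thesis
    proof (cases j)
      case 0 then show ?thesis using Cons Suc by auto
    next
      case (Suc j') then show ?thesis using Cons \<open>i = Suc i'\<close> by auto
    qed
  qed
qed

definition Vn :: "(nat list \<times> nat \<Rightarrow> 'v) \<Rightarrow> nat list \<Rightarrow> 'v set" where
  "Vn v p = {v (p, k) | k. True}"
definition VE :: "(nat list \<times> nat \<Rightarrow> 'v) \<Rightarrow> nat list \<Rightarrow> 'v set" where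
  "VE v p = {v (p @ r, k) | r k. True}"
definition SP :: "(nat list \<times> nat \<Rightarrow> 'v) \<Rightarrow> nat list \<Rightarrow> 'v set" where
  "SP v p = {v (q, k) | q k r. p = q @ r \<and> r \<noteq> []}"

lemma Vn_VE: "Vn v p \<subseteq> VE v p"
proof
  fix x assume "x \<in> Vn v p"
  then obtain k where "x = v (p, k)" unfolding Vn_def by blast
  then show "x \<in> VE v p" unfolding VE_def by (intro CollectI exI[of _ "[]"] exI[of _ k]) auto
qed

lemma VE_mono: "VE v (p @ [i]) \<subseteq> VE v p"
  unfolding VE_def by force

lemma Vn_VE_disj: "inj v \<Longrightarrow> Vn v p \<inter> VE v (p @ [i]) = {}"
proof -
  assume "inj v"
  { fix k r k' assume "v (p, k) = v ((p @ [i]) @ r, k')"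
    then have "p = (p @ [i]) @ r" using \<open>inj v\<close> by (auto dest: injD)
    then have "length p = length p + Suc (length r)" by (metis length_append length_append_singleton add_Suc add_Suc_right add.commute)
    then have False by simp }
  then show ?thesis unfolding Vn_def VE_def by blast
qed

lemma VE_disj: "inj v \<Longrightarrow> i \<noteq> j \<Longrightarrow> VE v (p @ [i]) \<inter> VE v (p @ [j]) = {}"
proof -
  assume "inj v" "i \<noteq> j"
  { fix r k r' k' assume "v ((p @ [i]) @ r, k) = v ((p @ [j]) @ r', k')"
    then have "(p @ [i]) @ r = (p @ [j]) @ r'" using \<open>inj v\<close> by (auto dest: injD)
    then have False using \<open>i \<noteq> j\<close> by simp }
  then show ?thesis unfolding VE_def by blast
qed

lemma SP_Vn_disj: "inj v \<Longrightarrow> SP v p \<inter> Vn v p = {}"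
proof -
  assume "inj v"
  { fix q k r k' assume "v (q, k) = v (p, k')" "p = q @ r" "r \<noteq> []"
    then have "q = p" using \<open>inj v\<close> by (auto dest: injD)
    then have False using \<open>p = q @ r\<close> \<open>r \<noteq> []\<close> by simp }
  then show ?thesis unfolding Vn_def SP_def by blast
qed

lemma SP_snoc: "SP v p \<union> Vn v p \<subseteq> SP v (p @ [i])"
proof
  fix x assume "x \<in> SP v p \<union> Vn v p"
  then show "x \<in> SP v (p @ [i])"
  proof
    assume "x \<in> SP v p"
    then obtain q k r where "x = v (q, k)" "p = q @ r" "r \<noteq> []" unfolding SP_def by blast
    then show ?thesis unfolding SP_def by (intro CollectI exI[of _ q] exI[of _ k] exI[of _ "r @ [i]"]) auto
  next
    assume "x \<in> Vn v p"
    then obtain k where "x = v (p, k)" unfolding Vn_def by blast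
    then show ?thesis unfolding SP_def by (intro CollectI exI[of _ p] exI[of _ k] exI[of _ "[i]"]) auto
  qed
qed

lemma SP_VE_disj: "inj v \<Longrightarrow> SP v q \<inter> VE v q = {}"
proof -
  assume "inj v"
  { fix q' k r r' k' assume "v (q', k) = v (q @ r', k')" "q = q' @ r" "r \<noteq> []"
    then have "q' = q @ r'" using \<open>inj v\<close> by (auto dest: injD)
    then have "length q = length q + length r' + length r" using \<open>q = q' @ r\<close> by (metis length_append)
    then have False using \<open>r \<noteq> []\<close> by simp }
  then show ?thesis unfolding VE_def SP_def by blast
qed



definition liftP where
  "liftP R Cs Asm CT v T p a th0 T' th \<longleftrightarrow> (\<forall>x. x \<notin> VE v p \<longrightarrow> th x = th0 x) \<and> tight_wf R Cs Asm T' \<and>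
     dlabel T' = Some a \<and> asubst th ` (dleaves T' \<inter> Asm) = dleaves T \<and>
     (\<forall>c\<in>dleaves T' \<inter> Cs. ground_atm (asubst th c) \<and> ct_entails CT (asubst th c)) \<and>
     (\<forall>S\<in>set (dintros T'). S \<subseteq> VE v p) \<and> pd (dintros T') \<and>
     (\<forall>c\<in>dleaves T'. avars c \<subseteq> avars a \<union> VE v p)"

lemma map_dlabel_None: "map dlabel ts = [None] \<Longrightarrow> ts = [DTrue]"
  by (cases ts) (auto simp: dlabel_None)

lemma lift:
  fixes v :: "nat list \<times> nat \<Rightarrow> 'v"
  assumes injv: "inj v" and pcC: "pred_closed Cs" and pcA: "pred_closed Asm" and disj: "Cs \<inter> Asm = {}"
    and heads: "\<forall>r\<in>R. fst r \<notin> Cs" and norm: "\<forall>r\<in>R. normalised Cs r"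
  shows "aba_wf (ground_rules Cs R CT) (ground_asms Asm) T \<Longrightarrow> dlabel T = Some ga \<Longrightarrow> asubst th0 a = ga \<Longrightarrow>
    avars a \<subseteq> SP v p \<Longrightarrow> \<exists>T' th. liftP R Cs Asm CT v T p a th0 T' th"
proof (induction T arbitrary: ga a th0 p)
  case DTrue
  then show ?case by simp
next
  case (DLeaf g)
  then have g: "g \<in> Asm" "ground_atm g" "g = ga" by (auto simp: ground_asms_def)
  then have aA: "a \<in> Asm" using DLeaf pred_closed_asubst_rev[OF pcA] by metis
  then have "a \<notin> Cs" using disj by auto
  then show ?case using aA g DLeaf by (intro exI[of _ "DLeaf a"] exI[of _ th0]) (auto simp: liftP_def)
next
  case (DNode ga' r ts)
  have rg: "r \<in> ground_rules Cs R CT" and fr: "fst r = ga'"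
    and lab: "map dlabel ts = (if snd r = [] then [None] else map Some (snd r))"
    and wf: "\<forall>t\<in>set ts. aba_wf (ground_rules Cs R CT) (ground_asms Asm) t"
    using DNode.prems(1) by auto
  have gg: "ga' = ga" using DNode.prems(2) by simp
  show ?case
  proof (cases "ga \<in> Cs")
    case True
    have notR: "\<not> (\<exists>h b \<sigma>. r = (asubst \<sigma> h, map (asubst \<sigma>) b) \<and> (h, b) \<in> R)"
    proof
      assume "\<exists>h b \<sigma>. r = (asubst \<sigma> h, map (asubst \<sigma>) b) \<and> (h, b) \<in> R"
      then obtain h b \<sigma> where "r = (asubst \<sigma> h, map (asubst \<sigma>) b)" "(h, b) \<in> R" by blast
      then have "asubst \<sigma> h \<in> Cs" using True fr gg by auto
      then have "h \<in> Cs" by (rule pred_closed_asubst_rev[OF pcC])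
      then show False using heads \<open>(h, b) \<in> R\<close> by auto
    qed
    then have r: "r = (ga, [])" "ground_atm ga" "ct_entails CT ga"
      using rg fr gg unfolding ground_rules_def by auto
    have ts: "ts = [DTrue]" using lab r by (intro map_dlabel_None) simp
    have aC: "a \<in> Cs" using True DNode.prems(3) pred_closed_asubst_rev[OF pcC] by metis
    then show ?thesis using r ts DNode.prems(3) disj
      by (intro exI[of _ "DLeaf a"] exI[of _ th0]) (auto simp: liftP_def)
  next
    case False
    obtain h b \<sigma>g where r: "r = (asubst \<sigma>g h, map (asubst \<sigma>g) b)" and hbR: "(h, b) \<in> R"
      and grb: "\<forall>c\<in>set b. ground_atm (asubst \<sigma>g c)"
      using rg fr gg False unfolding ground_rules_def by auto
    obtain q xs where h: "h = Atm q (map Var xs)" and dxs: "distinct xs"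
      using norm hbR unfolding normalised_def by fastforce
    obtain q' ts0 where a: "a = Atm q' ts0" by (cases a)
    have "asubst \<sigma>g h = ga" using r fr gg by simp
    then have "Atm q' (map (tsubst th0) ts0) = Atm q (map \<sigma>g xs)"
      using DNode.prems(3) a h by (simp add: comp_def)
    then have qq: "q' = q" and mm: "map (tsubst th0) ts0 = map \<sigma>g xs" by auto
    then have len: "length ts0 = length xs" by (metis length_map)
    have ts0: "\<And>i. i < length xs \<Longrightarrow> tsubst th0 (ts0 ! i) = \<sigma>g (xs ! i)"
      using mm len by (metis nth_map)
    define Y where "Y = \<Union> (set (map avars b)) - set xs"
    have "finite Y" unfolding Y_def by (auto simp: finite_avars)
    then obtain idx :: "'v \<Rightarrow> nat" where idx: "inj_on idx Y"
      using finite_imp_inj_to_nat_seg by blast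
    define \<sigma> where "\<sigma> y = (if y \<in> set xs then ts0 ! (SOME i. i < length xs \<and> xs ! i = y) else Var (v (p, idx y)))" for y
    have \<sigma>xs: "\<sigma> (xs ! i) = ts0 ! i" if "i < length xs" for i
    proof -
      have "(SOME j. j < length xs \<and> xs ! j = xs ! i) = i"
        using that dxs by (intro some_equality) (auto simp: nth_eq_iff_index_eq)
      then show ?thesis using that by (simp add: \<sigma>_def)
    qed
    have \<sigma>Y: "\<sigma> y = Var (v (p, idx y))" if "y \<in> Y" for y
      using that by (simp add: \<sigma>_def Y_def)
    define th0' where "th0' x = (if \<exists>y\<in>Y. x = v (p, idx y) then \<sigma>g (SOME y. y \<in> Y \<and> x = v (p, idx y)) else th0 x)" for x
    have F1: "th0' x = th0 x" if "x \<notin> Vn v p" for x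
      using that by (auto simp: th0'_def Vn_def)
    have F2: "th0' (v (p, idx y)) = \<sigma>g y" if "y \<in> Y" for y
    proof -
      have "(SOME y'. y' \<in> Y \<and> v (p, idx y) = v (p, idx y')) = y"
        using that idx injv by (intro some_equality) (auto dest: injD inj_onD)
      then show ?thesis using that by (auto simp: th0'_def)
    qed
    have avSP: "avars a \<subseteq> SP v p" by fact
    have F3: "asubst th0' (asubst \<sigma> c) = asubst \<sigma>g c" if "c \<in> set b" for c
      unfolding asubst_asubst
    proof (rule asubst_cong)
      fix y assume y: "y \<in> avars c"
      show "(tsubst th0' \<circ> \<sigma>) y = \<sigma>g y"
      proof (cases "y \<in> set xs")
        case True
        then obtain i where i: "i < length xs" "y = xs ! i" by (metis in_set_conv_nth)
        have "ts0 ! i \<in> set ts0" using i len by simp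
        then have "tvars (ts0 ! i) \<subseteq> avars a" using a by auto
        then have "\<forall>x\<in>tvars (ts0 ! i). th0' x = th0 x"
          using avSP SP_Vn_disj[OF injv] F1 by blast
        then have "tsubst th0' (ts0 ! i) = tsubst th0 (ts0 ! i)" by (intro tsubst_cong) auto
        then show ?thesis using i \<sigma>xs ts0 by simp
      next
        case False
        then have "y \<in> Y" using y that by (auto simp: Y_def)
        then show ?thesis using \<sigma>Y F2 by simp
      qed
    qed
    have F4: "avars (asubst \<sigma> c) \<subseteq> avars a \<union> Vn v p" if "c \<in> set b" for c
    proof
      fix x assume "x \<in> avars (asubst \<sigma> c)"
      then obtain y where y: "y \<in> avars c" "x \<in> tvars (\<sigma> y)" by (auto simp: avars_asubst)
      show "x \<in> avars a \<union> Vn v p"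
      proof (cases "y \<in> set xs")
        case True
        then obtain i where i: "i < length xs" "y = xs ! i" by (metis in_set_conv_nth)
        then show ?thesis using y \<sigma>xs len a by auto
      next
        case False
        then have "y \<in> Y" using y that by (auto simp: Y_def)
        then show ?thesis using \<sigma>Y y by (auto simp: Vn_def)
      qed
    qed
    have F5: "rule_step (h, b) a (if b = [] then [None] else map (\<lambda>c. Some (asubst \<sigma> c)) b)"
      unfolding rule_step_def Let_def
    proof (intro exI[of _ q] exI[of _ xs] exI[of _ ts0] exI[of _ \<sigma>] conjI)
      show "\<forall>y\<in>\<Union> (set (map avars (snd (h, b)))) - set xs. \<exists>z. \<sigma> y = Var z"
        by (auto simp: \<sigma>_def)
      show "inj_on \<sigma> (\<Union> (set (map avars (snd (h, b)))) - set xs)"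
      proof -
        have "inj_on \<sigma> Y"
        proof (rule inj_onI)
          fix x y assume "x \<in> Y" "y \<in> Y" "\<sigma> x = \<sigma> y"
          then have "v (p, idx x) = v (p, idx y)" using \<sigma>Y by simp
          then have "idx x = idx y" using injv by (auto dest: injD)
          then show "x = y" using idx \<open>x \<in> Y\<close> \<open>y \<in> Y\<close> by (auto dest: inj_onD)
        qed
        then show ?thesis by (simp add: Y_def)
      qed
      show "(\<Union>y\<in>\<Union> (set (map avars (snd (h, b)))) - set xs. tvars (\<sigma> y)) \<inter> avars a = {}"
        using avSP SP_Vn_disj[OF injv, of p] by (auto simp: \<sigma>_def Vn_def)
    qed (use h a qq len \<sigma>xs in auto)
    show ?thesis
    proof (cases "b = []")
      case True
      then have ts: "ts = [DTrue]" using lab r by (intro map_dlabel_None) simp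
      show ?thesis
        using F5 True ts hbR by (intro exI[of _ "DNode a (h, b) [DTrue]"] exI[of _ th0]) (auto simp: liftP_def)
    next
      case bne: False
      define n where "n = length b"
      have lab': "map dlabel ts = map Some (map (asubst \<sigma>g) b)" using lab bne r by simp
      have lts: "length ts = n" using arg_cong[OF lab', of length] unfolding n_def by simp
      have labi: "dlabel (ts ! i) = Some (asubst \<sigma>g (b ! i))" if "i < n" for i
      proof -
        have "map dlabel ts ! i = map Some (map (asubst \<sigma>g) b) ! i" using lab' by simp
        then show ?thesis using that lts n_def by simp
      qed
      have "\<forall>i<n. \<exists>X. liftP R Cs Asm CT v (ts ! i) (p @ [i]) (asubst \<sigma> (b ! i)) th0' (fst X) (snd X)"
      proof (intro allI impI)
        fix i assume i: "i < n"
        have bi: "b ! i \<in> set b" using i n_def by simp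
        have "ts ! i \<in> set ts" using i lts by simp
        moreover have "asubst th0' (asubst \<sigma> (b ! i)) = asubst \<sigma>g (b ! i)" using F3 bi by simp
        moreover have "avars (asubst \<sigma> (b ! i)) \<subseteq> SP v (p @ [i])"
          using F4[OF bi] avSP SP_snoc[of v p i] by blast
        ultimately have "\<exists>T' th. liftP R Cs Asm CT v (ts ! i) (p @ [i]) (asubst \<sigma> (b ! i)) th0' T' th"
          using DNode.IH wf labi[OF i] by blast
        then show "\<exists>X. liftP R Cs Asm CT v (ts ! i) (p @ [i]) (asubst \<sigma> (b ! i)) th0' (fst X) (snd X)"
          by auto
      qed
      then obtain Fc where Fc: "\<And>i. i < n \<Longrightarrow> liftP R Cs Asm CT v (ts ! i) (p @ [i]) (asubst \<sigma> (b ! i)) th0' (fst (Fc i)) (snd (Fc i))"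
        by metis
      define Tf where "Tf i = fst (Fc i)" for i
      define thf where "thf i = snd (Fc i)" for i
      have Lf: "liftP R Cs Asm CT v (ts ! i) (p @ [i]) (asubst \<sigma> (b ! i)) th0' (Tf i) (thf i)" if "i < n" for i
        using Fc[OF that] by (simp add: Tf_def thf_def)
      define th where "th x = (if \<exists>i<n. x \<in> VE v (p @ [i]) then thf (SOME i. i < n \<and> x \<in> VE v (p @ [i])) x else th0' x)" for x
      have th_child: "th x = thf i x" if "i < n" "x \<in> VE v (p @ [i])" for i x
      proof -
        have "(SOME j. j < n \<and> x \<in> VE v (p @ [j])) = i"
          using that VE_disj[OF injv] by (intro some_equality) blast+
        then show ?thesis using that by (auto simp: th_def)
      qed
      have th_out: "th x = th0' x" if "\<forall>j<n. x \<notin> VE v (p @ [j])" for x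
        using that by (auto simp: th_def)
      have out_SP: "\<forall>j<n. x \<notin> VE v (p @ [j])" if "x \<in> avars a \<union> Vn v p" for x
        using that avSP SP_snoc[of v p] SP_VE_disj[OF injv] by blast
      have leaf_agree: "asubst th c = asubst (thf i) c" if i: "i < n" and c: "c \<in> dleaves (Tf i)" for i c
      proof (rule asubst_cong)
        fix x assume x: "x \<in> avars c"
        have "avars c \<subseteq> avars (asubst \<sigma> (b ! i)) \<union> VE v (p @ [i])"
          using Lf[OF i] c unfolding liftP_def by blast
        then have "x \<in> avars a \<union> Vn v p \<or> x \<in> VE v (p @ [i])"
          using F4[of "b ! i"] i x n_def by auto
        then show "th x = thf i x"
        proof
          assume "x \<in> avars a \<union> Vn v p"
          then have "\<forall>j<n. x \<notin> VE v (p @ [j])" by (rule out_SP)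
          then show ?thesis using th_out Lf[OF i] i unfolding liftP_def by auto
        qed (use th_child i in auto)
      qed
      define T' where "T' = DNode a (h, b) (map Tf [0..<n])"
      have dlT: "dleaves T' = (\<Union>i\<in>{0..<n}. dleaves (Tf i))" by (auto simp: T'_def)
      have dlT0: "dleaves (DNode ga' r ts) = (\<Union>i\<in>{0..<n}. dleaves (ts ! i))"
      proof -
        have "set ts = (!) ts ` {0..<n}" using lts nth_image[of n ts] by simp
        then show ?thesis by (simp add: image_image)
      qed
      have Lf_tw: "tight_wf R Cs Asm (Tf i)" if "i < n" for i
        using Lf[OF that] unfolding liftP_def by blast
      have Lf_lab: "dlabel (Tf i) = Some (asubst \<sigma> (b ! i))" if "i < n" for i
        using Lf[OF that] unfolding liftP_def by blast
      have Lf_leaves: "asubst (thf i) ` (dleaves (Tf i) \<inter> Asm) = dleaves (ts ! i)" if "i < n" for i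
        using Lf[OF that] unfolding liftP_def by blast
      have Lf_C: "ground_atm (asubst (thf i) c) \<and> ct_entails CT (asubst (thf i) c)"
        if "i < n" "c \<in> dleaves (Tf i) \<inter> Cs" for i c
        using Lf[OF that(1)] that(2) unfolding liftP_def by blast
      have Lf_int: "S \<subseteq> VE v (p @ [i])" if "i < n" "S \<in> set (dintros (Tf i))" for i S
        using Lf[OF that(1)] that(2) unfolding liftP_def by blast
      have Lf_pd: "pd (dintros (Tf i))" if "i < n" for i
        using Lf[OF that] unfolding liftP_def by blast
      have Lf_vars: "avars c \<subseteq> avars (asubst \<sigma> (b ! i)) \<union> VE v (p @ [i])"
        if "i < n" "c \<in> dleaves (Tf i)" for i c
        using Lf[OF that(1)] that(2) unfolding liftP_def by blast
      have H: "\<Union> (set (map (lvars \<circ> dlabel) (map Tf [0..<n]))) - avars a \<subseteq> Vn v p"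
      proof
        fix x assume "x \<in> \<Union> (set (map (lvars \<circ> dlabel) (map Tf [0..<n]))) - avars a"
        then obtain i where i: "i < n" "x \<in> lvars (dlabel (Tf i))" "x \<notin> avars a" by auto
        then have "x \<in> avars (asubst \<sigma> (b ! i))" using Lf_lab[OF i(1)] by simp
        moreover have "b ! i \<in> set b" using i(1) n_def by simp
        ultimately show "x \<in> Vn v p" using F4 i(3) by blast
      qed
      have "liftP R Cs Asm CT v (DNode ga' r ts) p a th0 T' th"
        unfolding liftP_def
      proof (intro conjI)
        show "\<forall>x. x \<notin> VE v p \<longrightarrow> th x = th0 x"
        proof (intro allI impI)
          fix x assume x: "x \<notin> VE v p"
          have "\<forall>j<n. x \<notin> VE v (p @ [j])" using x VE_mono[of v p] by blast
          then have "th x = th0' x" by (rule th_out)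
          moreover have "x \<notin> Vn v p" using x Vn_VE[of v p] by blast
          ultimately show "th x = th0 x" using F1 by simp
        qed
        have "map dlabel (map Tf [0..<n]) = map (\<lambda>c. Some (asubst \<sigma> c)) b"
          using Lf_lab by (intro nth_equalityI) (auto simp: n_def)
        then have rs: "rule_step (h, b) a (map dlabel (map Tf [0..<n]))" using F5 bne by simp
        have "\<forall>t\<in>set (map Tf [0..<n]). tight_wf R Cs Asm t" using Lf_tw by auto
        then show "tight_wf R Cs Asm T'"
          unfolding T'_def using hbR rs by simp
        show "dlabel T' = Some a" by (simp add: T'_def)
        have "asubst th ` (dleaves T' \<inter> Asm) = (\<Union>i\<in>{0..<n}. asubst th ` (dleaves (Tf i) \<inter> Asm))"
          unfolding dlT by blast
        also have "\<dots> = (\<Union>i\<in>{0..<n}. asubst (thf i) ` (dleaves (Tf i) \<inter> Asm))"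
        proof (rule SUP_cong[OF refl])
          fix i assume "i \<in> {0..<n}"
          then show "asubst th ` (dleaves (Tf i) \<inter> Asm) = asubst (thf i) ` (dleaves (Tf i) \<inter> Asm)"
            using leaf_agree by (intro image_cong refl) auto
        qed
        also have "\<dots> = (\<Union>i\<in>{0..<n}. dleaves (ts ! i))"
          using Lf_leaves by (intro SUP_cong refl) auto
        finally show "asubst th ` (dleaves T' \<inter> Asm) = dleaves (DNode ga' r ts)" using dlT0 by simp
        show "\<forall>c\<in>dleaves T' \<inter> Cs. ground_atm (asubst th c) \<and> ct_entails CT (asubst th c)"
        proof
          fix c assume c: "c \<in> dleaves T' \<inter> Cs"
          then obtain i where i: "i < n" "c \<in> dleaves (Tf i)" unfolding dlT by auto
          have "asubst th c = asubst (thf i) c" using leaf_agree[OF i] .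
          then show "ground_atm (asubst th c) \<and> ct_entails CT (asubst th c)"
            using Lf_C[OF i(1)] i(2) c by simp
        qed
        show "\<forall>S\<in>set (dintros T'). S \<subseteq> VE v p"
        proof
          fix S assume "S \<in> set (dintros T')"
          then have "S = \<Union> (set (map (lvars \<circ> dlabel) (map Tf [0..<n]))) - avars a \<or>
                     (\<exists>i<n. S \<in> set (dintros (Tf i)))"
            by (auto simp: T'_def)
          then show "S \<subseteq> VE v p"
          proof
            assume "S = \<Union> (set (map (lvars \<circ> dlabel) (map Tf [0..<n]))) - avars a"
            then show ?thesis using H Vn_VE[of v p] by blast
          next
            assume "\<exists>i<n. S \<in> set (dintros (Tf i))"
            then obtain i where "i < n" "S \<in> set (dintros (Tf i))" by blast
            then show ?thesis using Lf_int VE_mono[of v p i] by blast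
          qed
        qed
        have "pd (concat (map (dintros \<circ> Tf) [0..<n]))"
        proof (rule pd_concat_map[where U="\<lambda>i. VE v (p @ [i])"])
          show "\<And>i. i < n \<Longrightarrow> pd ((dintros \<circ> Tf) i)" using Lf_pd by simp
          show "\<And>i x. i < n \<Longrightarrow> x \<in> set ((dintros \<circ> Tf) i) \<Longrightarrow> x \<subseteq> VE v (p @ [i])"
            using Lf_int by simp
          show "\<And>i j. i < n \<Longrightarrow> j < n \<Longrightarrow> i \<noteq> j \<Longrightarrow> VE v (p @ [i]) \<inter> VE v (p @ [j]) = {}"
            using VE_disj[OF injv] by blast
        qed
        moreover have "\<forall>y\<in>set (concat (map (dintros \<circ> Tf) [0..<n])).
            (\<Union> (set (map (lvars \<circ> dlabel) (map Tf [0..<n]))) - avars a) \<inter> y = {}"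
        proof
          fix y assume "y \<in> set (concat (map (dintros \<circ> Tf) [0..<n]))"
          then obtain i where i: "i < n" "y \<in> set (dintros (Tf i))" by auto
          then have "y \<subseteq> VE v (p @ [i])" by (rule Lf_int)
          then show "(\<Union> (set (map (lvars \<circ> dlabel) (map Tf [0..<n]))) - avars a) \<inter> y = {}"
            using H Vn_VE_disj[OF injv, of p i] by blast
        qed
        ultimately show "pd (dintros T')" by (simp add: T'_def map_map)
        show "\<forall>c\<in>dleaves T'. avars c \<subseteq> avars a \<union> VE v p"
        proof
          fix c assume "c \<in> dleaves T'"
          then obtain i where i: "i < n" "c \<in> dleaves (Tf i)" unfolding dlT by auto
          then have "avars c \<subseteq> avars (asubst \<sigma> (b ! i)) \<union> VE v (p @ [i])"
            by (rule Lf_vars)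
          moreover have "b ! i \<in> set b" using i(1) n_def by simp
          ultimately show "avars c \<subseteq> avars a \<union> VE v p"
            using F4[of "b ! i"] Vn_VE[of v p] VE_mono[of v p i] by blast
        qed
      qed
      then show ?thesis using gg by blast
    qed
  qed
qed



lemma asubst_Var: "asubst Var a = a"
  by (cases a) (auto simp: tsubst_Var map_idI)

lemma aba_leaves: "aba_wf Rg Ag T \<Longrightarrow> dleaves T \<subseteq> Ag"
  by (induction T) auto

theorem theorem5p12:
  fixes Lc Cs Asm :: "('p,'f,'v) atm set"
    and R :: "('p,'f,'v) rule set"
    and CT :: "('p,'f,'d) model set"
    and cp :: "'p \<Rightarrow> 'p" and eqp :: 'p
  assumes "caba_framework Lc Cs R CT Asm cp eqp"
    and "infinite (UNIV :: 'v set)"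
  shows "(\<forall>(C, A, Rs, s) \<in> gr_c_inst Cs CT (c_args Lc Cs R CT Asm).
            \<exists>(A', Rs', s') \<in> arg_c Cs R CT Asm. eq_mod_gc CT A s A' s')
       \<and> (\<forall>(A', Rs', s') \<in> arg_c Cs R CT Asm. s' \<notin> Cs \<longrightarrow>
            (\<exists>(C, A, Rs, s) \<in> gr_c_inst Cs CT (c_args Lc Cs R CT Asm). eq_mod_gc CT A s A' s'))"
proof -
  have pcL: "pred_closed Lc" and pcC: "pred_closed Cs" and pcA: "pred_closed Asm"
    and AL: "Asm \<subseteq> Lc - Cs" and Rp: "\<forall>r\<in>R. fst r \<in> Lc - Cs \<and> normalised Cs r"
    using assms(1) unfolding caba_framework_def by auto
  have disj: "Cs \<inter> Asm = {}" using AL by auto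
  have heads: "\<forall>r\<in>R. fst r \<notin> Cs" and norm: "\<forall>r\<in>R. normalised Cs r" using Rp by auto
  have P1: "\<exists>T'. aba_wf (ground_rules Cs R CT) (ground_asms Asm) T' \<and> dleaves T' = A \<and> dlabel T' = Some s"
    if \<beta>: "(C, A, Rs, s) \<in> gr_c_inst Cs CT (c_args Lc Cs R CT Asm)" for C A Rs s
  proof -
    from \<beta> obtain \<gamma> where \<gamma>: "\<gamma> \<in> c_args Lc Cs R CT Asm" and \<beta>i: "(C, A, Rs, s) \<in> c_inst Cs CT \<gamma>"
      and gc: "ground_carg (C, A, Rs, s)"
      unfolding gr_c_inst_def by blast
    from \<gamma> obtain \<alpha> where ta: "tight_arg Lc Cs R CT Asm \<alpha>" and \<gamma>i: "\<gamma> \<in> c_inst Cs CT \<alpha>"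
      unfolding c_args_def by blast
    obtain C0 A0 Rs0 s0 where \<alpha>: "\<alpha> = (C0, A0, Rs0, s0)" by (cases \<alpha>)
    obtain T where T: "tight_wf R Cs Asm T" "dlabel T = Some s0" "C0 = dleaves T \<inter> Cs" "A0 = dleaves T \<inter> Asm"
      using ta unfolding tight_arg_def \<alpha> by auto
    obtain th1 D1 where \<gamma>e: "\<gamma> = (asubst th1 ` C0 \<union> D1, asubst th1 ` A0, Rs0, asubst th1 s0)"
      using \<gamma>i unfolding c_inst_def \<alpha> by auto
    obtain th2 D2 where \<beta>e: "C = asubst th2 ` (asubst th1 ` C0 \<union> D1) \<union> D2" "A = asubst th2 ` asubst th1 ` A0"
        "s = asubst th2 (asubst th1 s0)" and cons: "ct_consistent CT C"
      using \<beta>i unfolding c_inst_def \<gamma>e by auto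
    define \<theta> where "\<theta> = (\<lambda>x. tsubst (\<lambda>_. Fn undefined []) (tsubst th2 (th1 x)))"
    have gr: "\<And>x. tvars (\<theta> x) = {}" unfolding \<theta>_def by (simp add: tvars_tsubst)
    have th_eq: "asubst \<theta> c = asubst th2 (asubst th1 c)" if "ground_atm (asubst th2 (asubst th1 c))" for c
    proof -
      have "asubst \<theta> c = asubst (\<lambda>_. Fn undefined []) (asubst th2 (asubst th1 c))"
        by (simp add: asubst_asubst \<theta>_def comp_def)
      then show ?thesis using asubst_ground[OF that] by simp
    qed
    have gC: "\<forall>c\<in>C. ground_atm c" and gA: "\<forall>a\<in>A. ground_atm a" and gs: "ground_atm s"
      using gc unfolding ground_carg_def by auto
    have ent: "\<forall>c\<in>dleaves T \<inter> Cs. ct_entails CT (asubst \<theta> c)"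
    proof
      fix c assume "c \<in> dleaves T \<inter> Cs"
      then have cC: "asubst th2 (asubst th1 c) \<in> C" using T(3) \<beta>e(1) by auto
      then have g: "ground_atm (asubst th2 (asubst th1 c))" using gC by auto
      then have "ct_entails CT (asubst th2 (asubst th1 c))" using consistent_entails[OF cons cC] by simp
      then show "ct_entails CT (asubst \<theta> c)" using th_eq[OF g] by simp
    qed
    obtain T' where T': "aba_wf (ground_rules Cs R CT) (ground_asms Asm) T'"
      "dleaves T' = asubst \<theta> ` (dleaves T \<inter> Asm)" "dlabel T' = map_option (asubst \<theta>) (dlabel T)"
      using ground_lift[OF pcC pcA disj gr T(1) ent] by blast
    have "asubst \<theta> ` (dleaves T \<inter> Asm) = A"
    proof -
      have "asubst \<theta> ` A0 = (\<lambda>c. asubst th2 (asubst th1 c)) ` A0"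
        using gA \<beta>e(2) th_eq by (intro image_cong) auto
      then show ?thesis using T(4) \<beta>e(2) by (simp add: image_image)
    qed
    moreover have "dlabel T' = Some s" using T'(3) T(2) th_eq gs \<beta>e(3) by simp
    ultimately show ?thesis using T' by auto
  qed
  have P2: "\<exists>C A Rs s. (C, A, Rs, s) \<in> gr_c_inst Cs CT (c_args Lc Cs R CT Asm) \<and> A = A' \<and> s = s'"
    if mem: "(A', Rs', s') \<in> arg_c Cs R CT Asm" and nc: "s' \<notin> Cs" for A' Rs' s'
  proof -
    obtain T where T: "A' = dleaves T" "T \<noteq> DTrue" "aba_wf (ground_rules Cs R CT) (ground_asms Asm) T"
      "dlabel T = Some s'"
    proof -
      from mem obtain T s where "(A', Rs', s') = (dleaves T, drules T, s)" "T \<noteq> DTrue"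
        "aba_wf (ground_rules Cs R CT) (ground_asms Asm) T" "dlabel T = Some s"
        unfolding arg_c_def aba_args_def by blast
      then show ?thesis using that by auto
    qed
    have gs: "ground_atm s'" and sL: "s' \<in> Lc"
    proof -
      have "ground_atm s' \<and> s' \<in> Lc"
      proof (cases T)
        case DTrue then show ?thesis using T by simp
      next
        case (DLeaf x) then show ?thesis using T AL by (auto simp: ground_asms_def)
      next
        case (DNode x r ts)
        then have r: "r \<in> ground_rules Cs R CT" "fst r = s'" using T by auto
        show ?thesis
        proof (cases "\<exists>h b \<sigma>. r = (asubst \<sigma> h, map (asubst \<sigma>) b) \<and> (h, b) \<in> R \<and> ground_atm (asubst \<sigma> h)")
          case True
          then obtain h b \<sigma> where "r = (asubst \<sigma> h, map (asubst \<sigma>) b)" "(h, b) \<in> R" "ground_atm (asubst \<sigma> h)"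
            by blast
          moreover have "h \<in> Lc" using Rp \<open>(h, b) \<in> R\<close> by force
          ultimately show ?thesis using r pred_closed_asubst[OF pcL] by auto
        next
          case False
          then show ?thesis using r nc unfolding ground_rules_def by auto
        qed
      qed
      then show "ground_atm s'" "s' \<in> Lc" by auto
    qed
    obtain f :: "nat \<Rightarrow> 'v" where f: "inj f" using infinite_countable_subset[OF assms(2)] by blast
    define v :: "nat list \<times> nat \<Rightarrow> 'v" where "v = f \<circ> to_nat"
    have injv: "inj v" unfolding v_def using f by (simp add: inj_compose)
    have "asubst Var s' = s'" by (rule asubst_Var)
    moreover have "avars s' \<subseteq> SP v []" using gs by (simp add: ground_atm_def)
    ultimately obtain T' th where L: "liftP R Cs Asm CT v T [] s' Var T' th"
      using lift[OF injv pcC pcA disj heads norm T(3) T(4)] by blast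
    define C0 where "C0 = dleaves T' \<inter> Cs"
    define A0 where "A0 = dleaves T' \<inter> Asm"
    have entC: "\<forall>c\<in>C0. ground_atm (asubst th c) \<and> ct_entails CT (asubst th c)"
      using L unfolding liftP_def C0_def by auto
    have finC: "finite C0" unfolding C0_def using finite_dleaves by auto
    have "ct_consistent CT C0"
      unfolding ct_consistent_def
    proof (intro conjI ballI finC)
      fix M assume M: "M \<in> CT"
      have "\<forall>c\<in>C0. asat M (teval (fst M) (\<lambda>_. undefined) \<circ> th) c"
        using entC M unfolding ct_entails_def by (auto simp: asat_asubst[symmetric])
      then show "\<exists>\<sigma>. \<forall>c\<in>C0. asat M \<sigma> c" by blast
    qed
    moreover have "dlabel T' = Some s'" "tight_wf R Cs Asm T'" "pd (dintros T')"
      using L unfolding liftP_def by auto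
    ultimately have ta: "tight_arg Lc Cs R CT Asm (C0, A0, drules T', s')"
      unfolding tight_arg_def renamed_apart_def Let_def
      using sL nc gs pd_nth[of "dintros T'"]
      by (auto simp: C0_def A0_def ground_atm_def intro!: exI[of _ T'])
    define \<beta> where "\<beta> = (asubst th ` C0 \<union> {}, asubst th ` A0, drules T', asubst th s')"
    have consb: "ct_consistent CT (asubst th ` C0 \<union> {})"
      using entC finC by (intro entails_consistent) auto
    have \<beta>i: "\<beta> \<in> c_inst Cs CT (C0, A0, drules T', s')"
      unfolding c_inst_def \<beta>_def using consb by blast
    have A'e: "asubst th ` A0 = A'" using L T(1) unfolding liftP_def A0_def by auto
    have s'e: "asubst th s' = s'" using gs by (rule asubst_ground)
    have gA': "\<forall>a\<in>A'. ground_atm a" using aba_leaves[OF T(3)] T(1) by (auto simp: ground_asms_def)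
    have gcb: "ground_carg \<beta>"
      unfolding ground_carg_def \<beta>_def using entC A'e s'e gA' gs by auto
    have "\<beta> \<in> c_inst Cs CT \<beta>"
    proof -
      have idI: "\<And>X. asubst Var ` X = X" by (simp add: asubst_Var)
      show ?thesis unfolding c_inst_def \<beta>_def prod.case mem_Collect_eq
        by (intro exI[of _ Var] exI[of _ "{}"]) (use consb in \<open>simp add: idI asubst_Var\<close>)
    qed
    moreover have "\<beta> \<in> c_args Lc Cs R CT Asm"
    proof -
      have "c_inst Cs CT (C0, A0, drules T', s') \<in> {c_inst Cs CT \<alpha> | \<alpha>. tight_arg Lc Cs R CT Asm \<alpha>}"
        using ta by blast
      then show ?thesis unfolding c_args_def using \<beta>i by (rule UnionI)
    qed
    ultimately have "\<beta> \<in> {\<beta>' \<in> c_inst Cs CT \<beta>. ground_carg \<beta>'}" using gcb by simp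
    then have "\<beta> \<in> gr_c_inst Cs CT (c_args Lc Cs R CT Asm)"
      unfolding gr_c_inst_def using \<open>\<beta> \<in> c_args Lc Cs R CT Asm\<close> by (rule UN_I[rotated])
    then have "(asubst th ` C0 \<union> {}, A', drules T', s') \<in> gr_c_inst Cs CT (c_args Lc Cs R CT Asm)"
      using A'e s'e by (simp only: \<beta>_def)
    then show ?thesis by (intro exI conjI) (assumption, rule refl, rule refl)
  qed
  show ?thesis
  proof (intro conjI)
    show "\<forall>(C, A, Rs, s) \<in> gr_c_inst Cs CT (c_args Lc Cs R CT Asm).
            \<exists>(A', Rs', s') \<in> arg_c Cs R CT Asm. eq_mod_gc CT A s A' s'"
    proof (clarify)
      fix C A Rs s assume "(C, A, Rs, s) \<in> gr_c_inst Cs CT (c_args Lc Cs R CT Asm)"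
      then obtain T' where T': "aba_wf (ground_rules Cs R CT) (ground_asms Asm) T'" "dleaves T' = A" "dlabel T' = Some s"
        using P1 by blast
      then have "(A, drules T', s) \<in> arg_c Cs R CT Asm"
        unfolding arg_c_def aba_args_def by (auto intro!: exI[of _ T'])
      then show "\<exists>(A', Rs', s') \<in> arg_c Cs R CT Asm. eq_mod_gc CT A s A' s'"
        by (rule bexI[rotated]) (simp add: eq_mod_gc_refl)
    qed
    show "\<forall>(A', Rs', s') \<in> arg_c Cs R CT Asm. s' \<notin> Cs \<longrightarrow>
            (\<exists>(C, A, Rs, s) \<in> gr_c_inst Cs CT (c_args Lc Cs R CT Asm). eq_mod_gc CT A s A' s')"
    proof (clarify)
      fix A' Rs' s' assume "(A', Rs', s') \<in> arg_c Cs R CT Asm" "s' \<notin> Cs"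
      then obtain C Rs where "(C, A', Rs, s') \<in> gr_c_inst Cs CT (c_args Lc Cs R CT Asm)"
        using P2 by blast
      then show "\<exists>(C, A, Rs, s) \<in> gr_c_inst Cs CT (c_args Lc Cs R CT Asm). eq_mod_gc CT A s A' s'"
        by (rule bexI[rotated]) (simp add: eq_mod_gc_refl)
    qed
  qed
qed

end
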